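(* Let $\Gamma$ be an immersed, connected, $C^2$ planar curve with total curvature $\int_\Gamma|\kappa|\,ds\le\alpha\pi$ for some positive integer $\alpha$. Then $\mathrm{Ent}[\Gamma]\le 4\alpha\sqrt{2}$.
   Context: $\kappa$ is the signed curvature and $ds$ arc length. For a curve $\Gamma$, $F_{x_0,\lambda}[\Gamma]=\frac{1}{\sqrt{4\pi\lambda}}\int_\Gamma e^{-|x-x_0|^2/(4\lambda)}\,ds$ (integral over the parametrization) and $\mathrm{Ent}[\Gamma]=\sup_{x_0\in\mathbb{R}^2,\lambda>0}F_{x_0,\lambda}[\Gamma]$. *)

theory Defs
  imports "HOL-Analysis.Analysis"
begin

text \<open>Planar curves are maps gamma :: real => real^2 on an interval I, with
first and second derivatives d1, d2 supplied explicitly.\<close>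

definition cross2 :: "real^2 \<Rightarrow> real^2 \<Rightarrow> real" where
  "cross2 u v = u$1 * v$2 - u$2 * v$1"

definition signed_curvature :: "(real \<Rightarrow> real^2) \<Rightarrow> (real \<Rightarrow> real^2) \<Rightarrow> real \<Rightarrow> real" where
  "signed_curvature d1 d2 t = cross2 (d1 t) (d2 t) / norm (d1 t) ^ 3"

definition total_curvature ::
  "(real \<Rightarrow> real^2) \<Rightarrow> (real \<Rightarrow> real^2) \<Rightarrow> real set \<Rightarrow> ennreal" where
  "total_curvature d1 d2 I =
     (\<integral>\<^sup>+ t\<in>I. ennreal (\<bar>signed_curvature d1 d2 t\<bar> * norm (d1 t)) \<partial>lborel)"

definition gauss_F ::
  "(real \<Rightarrow> real^2) \<Rightarrow> (real \<Rightarrow> real^2) \<Rightarrow> real set \<Rightarrow> real^2 \<Rightarrow> real \<Rightarrow> ennreal" where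
  "gauss_F gamma d1 I x0 lam =
     ennreal (1 / sqrt (4 * pi * lam)) *
     (\<integral>\<^sup>+ t\<in>I. ennreal (exp (- (norm (gamma t - x0))\<^sup>2 / (4 * lam)) * norm (d1 t)) \<partial>lborel)"

definition entropy ::
  "(real \<Rightarrow> real^2) \<Rightarrow> (real \<Rightarrow> real^2) \<Rightarrow> real set \<Rightarrow> ennreal" where
  "entropy gamma d1 I = (SUP p \<in> UNIV \<times> {0<..}. gauss_F gamma d1 I (fst p) (snd p))"

end

theory Submission
  imports Defs "HOL-Probability.Distributions"
begin

lemma norm2_sq: "(norm (v::real^2))^2 = v$1^2 + v$2^2"
  unfolding power2_norm_eq_inner inner_vec_def by (simp add: sum_2 power2_eq_square)

lemma inner2: "inner (u::real^2) v = u$1 * v$1 + u$2 * v$2"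
  by (simp add: inner_vec_def sum_2)

lemma unit_tangent_deriv:
  fixes d1 :: "real \<Rightarrow> real^2"
  assumes "(d1 has_vector_derivative v) (at t within I)" "d1 t \<noteq> 0"
  shows "((\<lambda>t. (1 / norm (d1 t)) *\<^sub>R d1 t) has_vector_derivative
     ((1 / norm (d1 t)) *\<^sub>R v - ((inner (d1 t) v) / norm (d1 t)^3) *\<^sub>R d1 t)) (at t within I)"
proof -
  have n: "((\<lambda>t. norm (d1 t)) has_vector_derivative inner (sgn (d1 t)) v) (at t within I)"
    unfolding has_vector_derivative_def
    apply (rule has_derivative_eq_rhs)
    apply (rule has_derivative_compose[OF assms(1)[unfolded has_vector_derivative_def] has_derivative_norm[OF assms(2)]])
    apply (auto simp: fun_eq_iff inner_scaleR_right inner_commute)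
    done
  have n': "((\<lambda>t. norm (d1 t)) has_real_derivative (inner (d1 t) v / norm (d1 t))) (at t within I)"
    using n by (simp add: has_real_derivative_iff_has_vector_derivative sgn_div_norm inner_scaleR_left divide_simps)
  have "((\<lambda>t. inverse (norm (d1 t))) has_real_derivative (- (inner (d1 t) v) / norm (d1 t)^3)) (at t within I)"
    apply (rule DERIV_cong[OF DERIV_inverse_fun[OF n']])
    using assms(2) by (auto simp: divide_simps power3_eq_cube power2_eq_square)
  then have inv: "((\<lambda>t. 1 / norm (d1 t)) has_real_derivative (- (inner (d1 t) v) / norm (d1 t)^3)) (at t within I)"
    by (simp add: inverse_eq_divide)
  show ?thesis
    apply (rule has_vector_derivative_eq_rhs[OF has_vector_derivative_scaleR[OF inv assms(1)]])
    by (simp add: algebra_simps)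
qed
lemma tangent_norm:
  fixes a b :: "real^2"
  assumes "a \<noteq> 0"
  shows "norm ((1 / norm a) *\<^sub>R b - ((inner a b) / norm a ^ 3) *\<^sub>R a) = \<bar>cross2 a b\<bar> / norm a ^ 2"
proof -
  define N where "N = norm a"
  have N: "N > 0" using assms by (simp add: N_def)
  have N2: "N^2 = a$1^2 + a$2^2" unfolding N_def by (rule norm2_sq)
  have "(norm ((1 / N) *\<^sub>R b - ((inner a b) / N ^ 3) *\<^sub>R a))^2 = (\<bar>cross2 a b\<bar> / N ^ 2)^2"
  proof -
    have "(norm ((1 / N) *\<^sub>R b - ((inner a b) / N ^ 3) *\<^sub>R a))^2 =
       (b$1 / N - (a$1*b$1+a$2*b$2)/N^3 * a$1)^2 + (b$2 / N - (a$1*b$1+a$2*b$2)/N^3 * a$2)^2"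
      by (simp add: norm2_sq inner2)
    also have "\<dots> = ((b$1 * N^2 - (a$1*b$1+a$2*b$2) * a$1)^2 + (b$2 * N^2 - (a$1*b$1+a$2*b$2) * a$2)^2) / N^6"
    proof -
      have e: "y / N - (a$1*b$1+a$2*b$2)/N^3 * x = (y * N^2 - (a$1*b$1+a$2*b$2) * x) / N^3" for x y
        using N by (simp add: field_simps power3_eq_cube power2_eq_square)
      have f: "(z / N^3)^2 = z^2 / N^6" for z
        by (simp add: power_divide flip: power_mult)
      show ?thesis unfolding e f by (simp add: add_divide_distrib)
    qed
    also have "(b$1 * N^2 - (a$1*b$1+a$2*b$2) * a$1)^2 + (b$2 * N^2 - (a$1*b$1+a$2*b$2) * a$2)^2
       = N^2 * (a$1*b$2 - a$2*b$1)^2"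
      unfolding N2 by algebra
    also have "N^2 * (a$1*b$2 - a$2*b$1)^2 / N^6 = (a$1*b$2 - a$2*b$1)^2 / N^4"
      using N by (simp add: field_simps eval_nat_numeral)
    also have "\<dots> = (\<bar>cross2 a b\<bar> / N ^ 2)^2"
      by (simp add: cross2_def power_divide flip: power_mult)
    finally show ?thesis .
  qed
  then show ?thesis unfolding N_def[symmetric]
    by (rule power2_eq_imp_eq) (use N in auto)
qed

lemma gauss_integral:
  fixes c lam :: real assumes lam: "lam > 0"
  shows "((\<lambda>u. exp (- (u - c)\<^sup>2 / (4*lam))) has_integral sqrt (4*pi*lam)) UNIV"
proof -
  define \<sigma> where "\<sigma> = sqrt (2*lam)"
  have s2: "\<sigma>^2 = 2*lam" using lam by (simp add: \<sigma>_def)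
  have eq: "exp (- (u - c)\<^sup>2 / (4*lam)) = sqrt (4*pi*lam) * normal_density c \<sigma> u" for u
    unfolding normal_density_def s2 using lam by (simp add: real_sqrt_mult)
  have "((\<lambda>u. sqrt (4*pi*lam) * normal_density c \<sigma> u) has_integral sqrt (4*pi*lam) * 1) UNIV"
    apply (rule has_integral_mult_right)
  proof -
    have "\<sigma> > 0" using lam by (simp add: \<sigma>_def)
    then show "(normal_density c \<sigma> has_integral 1) UNIV"
      using has_integral_integral_lborel[of "normal_density c \<sigma>"] by simp
  qed
  then show ?thesis unfolding eq by simp
qed

lemma piece_bound:
  fixes \<gamma> d :: "real \<Rightarrow> real^2" and S :: "real set" and e x0 :: "real^2" and \<delta> lam :: real
  assumes S: "is_interval S"
    and der: "\<And>t. t \<in> S \<Longrightarrow> (\<gamma> has_vector_derivative d t) (at t within S)"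
    and e: "norm e = 1" and \<delta>: "\<delta> > 0" and lam: "lam > 0"
    and dir: "\<And>t. t \<in> S \<Longrightarrow> \<delta> * norm (d t) \<le> inner (d t) e"
    and nz: "\<And>t. t \<in> S \<Longrightarrow> d t \<noteq> 0"
  shows "(\<integral>\<^sup>+t\<in>S. ennreal (exp (- (norm (\<gamma> t - x0))\<^sup>2 / (4 * lam)) * norm (d t)) \<partial>lborel)
          \<le> ennreal (sqrt (4*pi*lam) / \<delta>)"
proof -
  define \<phi> where "\<phi> t = inner (\<gamma> t) e" for t
  define \<phi>' where "\<phi>' t = inner (d t) e" for t
  define h where "h u = exp (- (u - inner x0 e)\<^sup>2 / (4*lam))" for u
  have der\<phi>: "(\<phi> has_field_derivative \<phi>' t) (at t within S)" if "t \<in> S" for t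
    unfolding has_real_derivative_iff_has_vector_derivative \<phi>_def \<phi>'_def
    by (rule bounded_linear.has_vector_derivative[OF bounded_linear_inner_left der[OF that]])
  have pos: "\<phi>' t > 0" if "t \<in> S" for t
  proof -
    have "\<delta> * norm (d t) > 0" using \<delta> nz[OF that] by simp
    then show ?thesis using dir[OF that] unfolding \<phi>'_def by linarith
  qed
  have cont: "continuous_on S \<phi>"
    unfolding continuous_on_eq_continuous_within
  proof (intro ballI)
    fix t assume t: "t \<in> S"
    show "continuous (at t within S) \<phi>" by (rule DERIV_continuous[OF der\<phi>[OF t]])
  qed
  have Sint: "x \<in> S" if "a \<in> S" "b \<in> S" "a \<le> x" "x \<le> b" for a b x
    using S that unfolding is_interval_1 by blast
  have incr: "\<phi> s < \<phi> t" if st: "s \<in> S" "t \<in> S" "s < t" for s t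
  proof (rule DERIV_pos_imp_increasing_open[OF \<open>s < t\<close>])
    have sub: "{s..t} \<subseteq> S"
    proof
      fix x assume "x \<in> {s..t}" then show "x \<in> S" using Sint[OF st(1) st(2)] by simp
    qed
    show "continuous_on {s..t} \<phi>"
      by (rule continuous_on_subset[OF cont sub])
    fix x assume x: "s < x" "x < t"
    have xS: "x \<in> S" by (rule subsetD[OF sub]) (use x in simp)
    have "(\<phi> has_field_derivative \<phi>' x) (at x within {s<..<t})"
      by (rule DERIV_subset[OF der\<phi>[OF xS]]) (rule subset_trans[OF _ sub], auto)
    moreover have "at x within {s<..<t} = at x" by (rule at_within_open) (use x in auto)
    ultimately have "(\<phi> has_field_derivative \<phi>' x) (at x)"
      by simp
    then show "\<exists>y. (\<phi> has_field_derivative y) (at x) \<and> 0 < y" using pos[OF xS] by blast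
  qed
  have inj: "inj_on \<phi> S"
  proof (rule inj_onI)
    fix s t assume "s \<in> S" "t \<in> S" "\<phi> s = \<phi> t"
    then show "s = t" using incr[of s t] incr[of t s] by (cases s t rule: linorder_cases) auto
  qed
  have Smeas: "S \<in> sets lebesgue"
    using real_interval_borel_measurable[OF S] by simp
  have Tmeas: "\<phi> ` S \<in> sets lebesgue"
  proof -
    have "connected (\<phi> ` S)"
      by (rule connected_continuous_image[OF cont]) (use S is_interval_connected in blast)
    then have "is_interval (\<phi> ` S)" by (simp add: is_interval_connected_1)
    then show ?thesis using real_interval_borel_measurable by simp
  qed
  have hint: "(h has_integral sqrt (4*pi*lam)) UNIV"
    unfolding h_def by (rule gauss_integral[OF lam])
  have hnn: "h u \<ge> 0" for u unfolding h_def by simp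
  have habsU: "h absolutely_integrable_on UNIV"
  proof (subst absolutely_integrable_on_iff_nonneg)
    show "h integrable_on UNIV" using hint by (rule has_integral_integrable)
  qed (rule hnn)
  have habsT: "h absolutely_integrable_on (\<phi> ` S)"
    by (rule set_integrable_subset[OF habsU]) (use Tmeas in auto)
  define b where "b = integral (\<phi> ` S) h"
  have b_le: "b \<le> sqrt (4*pi*lam)"
  proof -
    have "b \<le> integral UNIV h"
      unfolding b_def
      by (rule integral_subset_le) (auto intro: set_lebesgue_integral_eq_integral(1)[OF habsT]
          has_integral_integrable[OF hint] hnn)
    then show ?thesis by (simp only: integral_unique[OF hint])
  qed
  have cov: "(\<lambda>x. \<bar>\<phi>' x\<bar> * h (\<phi> x)) absolutely_integrable_on S \<and>
             integral S (\<lambda>x. \<bar>\<phi>' x\<bar> * h (\<phi> x)) = b"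
    by (subst has_absolute_integral_change_of_variables_1'[OF Smeas der\<phi> inj, of h b]) (simp_all add: habsT b_def)
  define G where "G x = (1/\<delta>) * (\<bar>\<phi>' x\<bar> * h (\<phi> x))" for x
  have Gint: "(G has_integral ((1/\<delta>) * b)) S"
  proof -
    have i: "(\<lambda>x. \<bar>\<phi>' x\<bar> * h (\<phi> x)) integrable_on S"
      using cov by (intro set_lebesgue_integral_eq_integral(1)) simp
    have "((\<lambda>x. \<bar>\<phi>' x\<bar> * h (\<phi> x)) has_integral b) S"
      using integrable_integral[OF i] cov by simp
    then show ?thesis unfolding G_def by (rule has_integral_mult_right)
  qed
  have Gnn: "G x \<ge> 0" for x unfolding G_def using \<delta> hnn by simp
  have pw: "ennreal (exp (- (norm (\<gamma> t - x0))\<^sup>2 / (4 * lam)) * norm (d t)) * indicator S t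
             \<le> ennreal (G t) * indicator S t" for t
  proof (cases "t \<in> S")
    case True
    have cs: "\<bar>inner (\<gamma> t - x0) e\<bar> \<le> norm (\<gamma> t - x0)"
      using Cauchy_Schwarz_ineq2[of "\<gamma> t - x0" e] e by simp
    have "(\<phi> t - inner x0 e)^2 \<le> (norm (\<gamma> t - x0))^2"
    proof -
      have "\<phi> t - inner x0 e = inner (\<gamma> t - x0) e" unfolding \<phi>_def by (simp add: inner_diff_left)
      then show ?thesis using cs by (metis abs_ge_zero power2_abs power_mono)
    qed
    then have ex: "exp (- (norm (\<gamma> t - x0))\<^sup>2 / (4 * lam)) \<le> h (\<phi> t)"
      unfolding h_def using lam by (simp add: divide_right_mono)
    have nd: "norm (d t) \<le> (1/\<delta>) * \<bar>\<phi>' t\<bar>"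
      using dir[OF True] \<delta> pos[OF True] unfolding \<phi>'_def by (simp add: field_simps)
    have "exp (- (norm (\<gamma> t - x0))\<^sup>2 / (4 * lam)) * norm (d t) \<le> h (\<phi> t) * ((1/\<delta>) * \<bar>\<phi>' t\<bar>)"
      by (rule mult_mono[OF ex nd]) (use hnn in auto)
    then show ?thesis using True unfolding G_def by (auto simp: ac_simps intro!: ennreal_leI)
  qed simp
  have "(\<integral>\<^sup>+t\<in>S. ennreal (exp (- (norm (\<gamma> t - x0))\<^sup>2 / (4 * lam)) * norm (d t)) \<partial>lborel)
        \<le> (\<integral>\<^sup>+t. ennreal (G t) * indicator S t \<partial>lborel)"
    by (rule nn_integral_mono) (rule pw)
  also have "\<dots> = ennreal ((1/\<delta>) * b)"
    by (rule nn_integral_has_integral_lebesgue'[OF _ Gint]) (rule Gnn)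
  also have "\<dots> \<le> ennreal (sqrt (4*pi*lam) / \<delta>)"
    using b_le \<delta> by (intro ennreal_leI) (simp add: divide_right_mono)
  finally show ?thesis .
qed

lemma unit_inner:
  fixes u v :: "'a::real_inner"
  assumes "norm u = 1" "norm v = 1"
  shows "inner u v = 1 - (norm (u - v))\<^sup>2 / 2"
proof -
  have "(norm (u - v))\<^sup>2 = (norm u)\<^sup>2 - 2 * inner u v + (norm v)\<^sup>2"
    by (simp add: power2_norm_eq_inner inner_diff inner_commute algebra_simps)
  then have "(norm (u - v))\<^sup>2 = 2 - 2 * inner u v" using assms by simp
  then show ?thesis by linarith
qed

lemma sqrt2_bound: "8/7 \<le> sqrt (2::real)"
  by (rule real_le_rsqrt) (simp add: power2_eq_square)

theorem theorem3p3:
  fixes gamma d1 d2 :: "real \<Rightarrow> real^2" and I :: "real set" and \<alpha> :: nat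
  assumes interval: "is_interval I"
    and d1: "\<And>t. t \<in> I \<Longrightarrow> (gamma has_vector_derivative d1 t) (at t within I)"
    and d2: "\<And>t. t \<in> I \<Longrightarrow> (d1 has_vector_derivative d2 t) (at t within I)"
    and cont2: "continuous_on I d2"
    and immersed: "\<And>t. t \<in> I \<Longrightarrow> d1 t \<noteq> 0"
    and alpha_pos: "\<alpha> \<ge> 1"
    and tc: "total_curvature d1 d2 I \<le> ennreal (real \<alpha> * pi)"
  shows "entropy gamma d1 I \<le> ennreal (4 * real \<alpha> * sqrt 2)"
proof -
  have Iint: "x \<in> I" if "a \<in> I" "b \<in> I" "a \<le> x" "x \<le> b" for a b x
    using interval that unfolding is_interval_1 by blast
  have subI: "{s..t} \<subseteq> I" if "s \<in> I" "t \<in> I" for s t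
    using Iint[OF that] by auto
  have gc: "continuous_on I gamma"
    using d1 by (auto simp: continuous_on_eq_continuous_within intro!: has_vector_derivative_continuous)
  have d1c: "continuous_on I d1"
    using d2 by (auto simp: continuous_on_eq_continuous_within intro!: has_vector_derivative_continuous)
  define g where "g = (\<lambda>t. \<bar>cross2 (d1 t) (d2 t)\<bar> / norm (d1 t)^2)"
  have gcont: "continuous_on I g"
    unfolding g_def cross2_def by (intro continuous_intros d1c cont2) (use immersed in auto)
  have gnn: "g t \<ge> 0" for t unfolding g_def by simp
  have gint: "g integrable_on {s..t}" if "s \<in> I" "t \<in> I" for s t
    by (rule integrable_continuous_interval[OF continuous_on_subset[OF gcont subI[OF that]]])
  define T where "T = (\<lambda>t. (1 / norm (d1 t)) *\<^sub>R d1 t)"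
  define T' where "T' = (\<lambda>t. (1 / norm (d1 t)) *\<^sub>R d2 t - ((inner (d1 t) (d2 t)) / norm (d1 t)^3) *\<^sub>R d1 t)"
  have derT: "(T has_vector_derivative T' t) (at t within I)" if "t \<in> I" for t
    unfolding T_def T'_def by (rule unit_tangent_deriv[OF d2[OF that] immersed[OF that]])
  have nT': "norm (T' t) = g t" if "t \<in> I" for t
    unfolding T'_def g_def by (rule tangent_norm[OF immersed[OF that]])
  have normT: "norm (T t) = 1" if "t \<in> I" for t
    unfolding T_def using immersed[OF that] by simp
  have chord: "norm (T t - T s) \<le> integral {s..t} g" if st: "s \<in> I" "t \<in> I" "s \<le> t" for s t
  proof -
    have hi: "(T' has_integral (T t - T s)) {s..t}"
    proof (rule fundamental_theorem_of_calculus[OF \<open>s \<le> t\<close>])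
      fix x assume x: "x \<in> {s..t}"
      have xI: "x \<in> I" using subI[OF st(1,2)] x by blast
      show "(T has_vector_derivative T' x) (at x within {s..t})"
        by (rule has_vector_derivative_within_subset[OF derT[OF xI] subI[OF st(1,2)]])
    qed
    have "norm (integral {s..t} T') \<le> integral {s..t} g"
    proof (rule integral_norm_bound_integral)
      show "T' integrable_on {s..t}" using hi by blast
      show "g integrable_on {s..t}" by (rule gint[OF st(1,2)])
      fix x assume x: "x \<in> {s..t}"
      have xI: "x \<in> I" using subI[OF st(1,2)] x by blast
      show "norm (T' x) \<le> g x" using nT'[OF xI] by simp
    qed
    then show ?thesis using integral_unique[OF hi] by simp
  qed
  have tcb: "integral {s..t} g \<le> real \<alpha> * pi" if st: "s \<in> I" "t \<in> I" "s \<le> t" for s t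
  proof -
    have eq: "(\<integral>\<^sup>+x. ennreal (g x) * indicator {s..t} x \<partial>lborel) = ennreal (integral {s..t} g)"
      by (rule nn_integral_has_integral_lebesgue'[OF gnn integrable_integral[OF gint[OF st(1,2)]]])
    have "(\<integral>\<^sup>+x. ennreal (g x) * indicator {s..t} x \<partial>lborel) \<le> total_curvature d1 d2 I"
      unfolding total_curvature_def
    proof (rule nn_integral_mono)
      fix x
      show "ennreal (g x) * indicator {s..t} x
          \<le> ennreal (\<bar>signed_curvature d1 d2 x\<bar> * norm (d1 x)) * indicator I x"
      proof (cases "x \<in> {s..t}")
        case True
        then have xI: "x \<in> I" using subI[OF st(1,2)] by blast
        have n: "norm (d1 x) > 0" using immersed[OF xI] by simp
        have "g x = \<bar>signed_curvature d1 d2 x\<bar> * norm (d1 x)"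
          unfolding g_def signed_curvature_def using n
          by (simp add: abs_divide power3_eq_cube power2_eq_square)
        then show ?thesis using True xI by simp
      qed simp
    qed
    also have "\<dots> \<le> ennreal (real \<alpha> * pi)" by (rule tc)
    finally have "ennreal (integral {s..t} g) \<le> ennreal (real \<alpha> * pi)" using eq by simp
    then show ?thesis by (subst (asm) ennreal_le_iff) auto
  qed
  show ?thesis
  proof (cases "I = {}")
    case True
    then show ?thesis
      unfolding entropy_def gauss_F_def by simp
  next
    case False
    then obtain t0 where t0: "t0 \<in> I" by blast
    define K where "K = (\<lambda>t. if t0 \<le> t then integral {t0..t} g else - integral {t..t0} g)"
    have Kdiff: "K t - K s = integral {s..t} g" if st: "s \<in> I" "t \<in> I" "s \<le> t" for s t
    proof -
      consider "t0 \<le> s" | "s < t0" "t0 \<le> t" | "t < t0" by linarith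
      then show ?thesis
      proof cases
        case 1
        then show ?thesis using Henstock_Kurzweil_Integration.integral_combine[OF 1 st(3) gint[OF t0 st(2)]] st unfolding K_def by auto
      next
        case 2
        then show ?thesis using Henstock_Kurzweil_Integration.integral_combine[of s t0 t g] gint[OF st(1,2)] unfolding K_def by auto
      next
        case 3
        then show ?thesis using Henstock_Kurzweil_Integration.integral_combine[of s t t0 g] gint[OF st(1) t0] st unfolding K_def by auto
      qed
    qed
    have intnn: "integral {s..t} g \<ge> 0" if st: "s \<in> I" "t \<in> I" for s t
      by (rule Henstock_Kurzweil_Integration.integral_nonneg[OF gint[OF st]]) (rule gnn)
    have Kmono: "K s \<le> K t" if st: "s \<in> I" "t \<in> I" "s \<le> t" for s t
      using Kdiff[OF st] intnn[OF st(1,2)] by linarith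
    have Kle: "K t - K s \<le> real \<alpha> * pi" if st: "s \<in> I" "t \<in> I" "s \<le> t" for s t
      using Kdiff[OF st] tcb[OF st] by linarith
    have Kchord: "norm (T t - T s) \<le> \<bar>K t - K s\<bar>" if st: "s \<in> I" "t \<in> I" for s t
    proof (cases "s \<le> t")
      case True
      then show ?thesis using chord[OF st True] Kdiff[OF st True] by linarith
    next
      case False
      then have "t \<le> s" by simp
      then show ?thesis using chord[OF st(2,1)] Kdiff[OF st(2,1)] by (simp add: norm_minus_commute)
    qed
    have Kcont: "continuous_on {s..t} K" if st: "s \<in> I" "t \<in> I" "s \<le> t" for s t
    proof -
      have "continuous_on {s..t} (\<lambda>u. K s + integral {s..u} g)"
        by (intro continuous_intros indefinite_integral_continuous_1 gint[OF st(1,2)])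
      moreover have "K u = K s + integral {s..u} g" if "u \<in> {s..t}" for u
      proof -
        have uI: "u \<in> I" using subI[OF st(1,2)] that by blast
        show ?thesis using Kdiff[OF st(1) uI] that by simp
      qed
      ultimately show ?thesis using continuous_on_cong by (metis (no_types, lifting))
    qed
    have apnn: "real \<alpha> * pi \<ge> 0" by simp
    define m where "m = Inf (K ` I)"
    have lowb: "K t0 - real \<alpha> * pi \<le> K t" if "t \<in> I" for t
    proof (cases "t0 \<le> t")
      case True
      then show ?thesis using Kmono[OF t0 that True] apnn by linarith
    next
      case False
      then show ?thesis using Kle[OF that t0] by simp
    qed
    have bdd: "bdd_below (K ` I)"
      using lowb by (intro bdd_belowI2) auto
    have mle: "m \<le> K t" if "t \<in> I" for t
      unfolding m_def by (rule cInf_lower) (use that bdd in auto)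
    have mge: "K t \<le> m + real \<alpha> * pi" if tI: "t \<in> I" for t
    proof -
      have "K t - real \<alpha> * pi \<le> m"
        unfolding m_def
      proof (rule cInf_greatest)
        show "K ` I \<noteq> {}" using t0 by blast
        fix y assume "y \<in> K ` I"
        then obtain s where s: "s \<in> I" "y = K s" by blast
        show "K t - real \<alpha> * pi \<le> y"
        proof (cases "s \<le> t")
          case True then show ?thesis using Kle[OF s(1) tI True] s by simp
        next
          case False
          then have "K t \<le> K s" using Kmono[OF tI s(1)] by simp
          then show ?thesis using s(2) apnn by linarith
        qed
      qed
      then show ?thesis by simp
    qed
    define P where "P = (\<lambda>k::nat. {t \<in> I. m + real k * (pi/4) \<le> K t \<and> K t \<le> m + (real k + 1) * (pi/4)})"
    have Psub: "P k \<subseteq> I" for k unfolding P_def by blast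
    have Pint: "is_interval (P k)" for k
      unfolding is_interval_1
    proof (intro ballI allI impI)
      fix a b x assume a: "a \<in> P k" and b: "b \<in> P k" and x: "a \<le> x \<and> x \<le> b"
      have aI: "a \<in> I" and bI: "b \<in> I" using a b unfolding P_def by auto
      have xI: "x \<in> I" using Iint[OF aI bI] x by auto
      have "K a \<le> K x" "K x \<le> K b" using Kmono[OF aI xI] Kmono[OF xI bI] x by auto
      then show "x \<in> P k" using a b xI unfolding P_def by auto
    qed
    have cover: "\<exists>k<4*\<alpha>. t \<in> P k" if tI: "t \<in> I" for t
    proof -
      define x where "x = (K t - m) / (pi/4)"
      have x0: "0 \<le> x" unfolding x_def using mle[OF tI] by simp
      have x4: "x \<le> 4 * real \<alpha>" unfolding x_def using mge[OF tI] by (simp add: field_simps)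
      obtain k :: nat where k: "real k \<le> x" "x \<le> real k + 1" "k < 4*\<alpha>"
      proof (cases "x < 4 * real \<alpha>")
        case True
        show ?thesis
        proof (rule that[of "nat \<lfloor>x\<rfloor>"])
          show "real (nat \<lfloor>x\<rfloor>) \<le> x" using x0 by linarith
          show "x \<le> real (nat \<lfloor>x\<rfloor>) + 1" using x0 by linarith
          have "\<lfloor>x\<rfloor> < int (4 * \<alpha>)" using True by linarith
          then show "nat \<lfloor>x\<rfloor> < 4 * \<alpha>" using x0 by (subst nat_less_iff) auto
        qed
      next
        case False
        then have xe: "x = 4 * real \<alpha>" using x4 by simp
        show ?thesis
        proof (rule that[of "4*\<alpha> - 1"])
          show "real (4 * \<alpha> - 1) \<le> x" using xe alpha_pos by (simp add: of_nat_diff)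
          show "x \<le> real (4 * \<alpha> - 1) + 1" using xe alpha_pos by (simp add: of_nat_diff)
          show "4 * \<alpha> - 1 < 4 * \<alpha>" using alpha_pos by simp
        qed
      qed
      have "m + real k * (pi/4) \<le> K t"
      proof -
        have "real k * (pi/4) \<le> x * (pi/4)" using k(1) by (simp add: mult_right_mono)
        then show ?thesis unfolding x_def by simp
      qed
      moreover have "K t \<le> m + (real k + 1) * (pi/4)"
      proof -
        have "x * (pi/4) \<le> (real k + 1) * (pi/4)" using k(2) by (simp add: mult_right_mono)
        then show ?thesis unfolding x_def by simp
      qed
      ultimately show ?thesis using k(3) tI unfolding P_def by auto
    qed
    have center: "\<exists>c\<in>I. \<forall>t\<in>P k. \<bar>K t - K c\<bar> \<le> pi/8" if ne: "P k \<noteq> {}" for k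
    proof -
      define lo where "lo = m + real k * (pi/4)"
      define mid where "mid = lo + pi/8"
      have Pk: "t \<in> I \<and> lo \<le> K t \<and> K t \<le> mid + pi/8" if "t \<in> P k" for t
      proof -
        have "t \<in> I" "m + real k * (pi/4) \<le> K t" "K t \<le> m + (real k + 1) * (pi/4)"
          using that unfolding P_def by auto
        moreover have "(real k + 1) * (pi/4) = real k * (pi/4) + pi/8 + pi/8" by (simp add: distrib_right)
        ultimately show ?thesis unfolding lo_def mid_def by linarith
      qed
      show ?thesis
      proof (cases "\<exists>t1\<in>P k. K t1 \<le> mid")
        case True
        then obtain t1 where t1: "t1 \<in> P k" "K t1 \<le> mid" by blast
        show ?thesis
        proof (cases "\<exists>t2\<in>P k. mid \<le> K t2")
          case True
          then obtain t2 where t2: "t2 \<in> P k" "mid \<le> K t2" by blast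
          have t1I: "t1 \<in> I" and t2I: "t2 \<in> I" using Pk t1(1) t2(1) by auto
          have "\<exists>c\<in>I. K c = mid"
          proof (cases "t1 \<le> t2")
            case True
            obtain c where c: "t1 \<le> c" "c \<le> t2" "K c = mid"
              using IVT'[of K t1 mid t2, OF t1(2) t2(2) True Kcont[OF t1I t2I True]] by blast
            have "c \<in> I" using Iint[OF t1I t2I c(1,2)] .
            then show ?thesis using c by blast
          next
            case False
            then have "K t2 \<le> K t1" using Kmono[OF t2I t1I] by simp
            then show ?thesis using t1 t2 t1I by (intro bexI[of _ t1]) auto
          qed
          then obtain c where c: "c \<in> I" "K c = mid" by blast
          show ?thesis
          proof (rule bexI[OF _ c(1)], intro ballI)
            fix t assume "t \<in> P k"
            then have "lo \<le> K t" "K t \<le> mid + pi/8" using Pk[of t] by auto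
            then show "\<bar>K t - K c\<bar> \<le> pi/8" using c unfolding mid_def by arith
          qed
        next
          case False
          have t1I: "t1 \<in> I" using Pk t1(1) by auto
          show ?thesis
          proof (rule bexI[OF _ t1I], intro ballI)
            fix t assume t: "t \<in> P k"
            have "K t < mid" using False t by force
            moreover have "lo \<le> K t" "lo \<le> K t1" using Pk[OF t] Pk[OF t1(1)] by auto
            ultimately show "\<bar>K t - K t1\<bar> \<le> pi/8" using t1 unfolding mid_def by arith
          qed
        qed
      next
        case False
        obtain t1 where t1: "t1 \<in> P k" using ne by blast
        have t1I: "t1 \<in> I" using Pk t1 by auto
        show ?thesis
        proof (rule bexI[OF _ t1I], intro ballI)
          fix t assume t: "t \<in> P k"
          have "K t > mid" "K t1 > mid" using False t t1 by force+
          moreover have "K t \<le> mid + pi/8" "K t1 \<le> mid + pi/8" using Pk[OF t] Pk[OF t1] by auto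
          ultimately show "\<bar>K t - K t1\<bar> \<le> pi/8" by arith
        qed
      qed
    qed
    have main: "(\<integral>\<^sup>+t\<in>I. ennreal (exp (- (norm (gamma t - x0))\<^sup>2 / (4 * lam)) * norm (d1 t)) \<partial>lborel)
        \<le> ennreal (4 * real \<alpha> * (sqrt (4*pi*lam) * sqrt 2))" if lam: "lam > 0" for x0 lam
    proof -
      define F where "F = (\<lambda>t. exp (- (norm (gamma t - x0))\<^sup>2 / (4 * lam)) * norm (d1 t))"
      define C where "C = sqrt (4*pi*lam) * sqrt 2"
      have Fc: "continuous_on I F" unfolding F_def by (intro continuous_intros gc d1c) (use lam in auto)
      have Fnn: "F t \<ge> 0" for t unfolding F_def by simp
      have meas: "(\<lambda>t. ennreal (F t) * indicator (P k) t) \<in> borel_measurable lborel" for k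
      proof -
        have Pb: "P k \<in> sets borel" by (rule real_interval_borel_measurable[OF Pint])
        have "(\<lambda>x. indicator (P k) x *\<^sub>R F x) \<in> borel_measurable borel"
          by (rule borel_measurable_continuous_on_indicator[OF Pb continuous_on_subset[OF Fc Psub]])
        then have "(\<lambda>x. ennreal (indicator (P k) x *\<^sub>R F x)) \<in> borel_measurable borel"
          by (rule measurable_compose[OF _ measurable_ennreal])
        moreover have "(\<lambda>x. ennreal (indicator (P k) x *\<^sub>R F x)) = (\<lambda>t. ennreal (F t) * indicator (P k) t)"
          by (auto simp: fun_eq_iff split: split_indicator)
        ultimately show ?thesis by simp
      qed
      have piece: "(\<integral>\<^sup>+t. ennreal (F t) * indicator (P k) t \<partial>lborel) \<le> ennreal C" for k
      proof (cases "P k = {}")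
        case True
        then show ?thesis by simp
      next
        case False
        obtain c where cI: "c \<in> I" and c: "\<forall>t\<in>P k. \<bar>K t - K c\<bar> \<le> pi/8"
          using center[OF False] by blast
        have "(\<integral>\<^sup>+t\<in>P k. ennreal (exp (- (norm (gamma t - x0))\<^sup>2 / (4 * lam)) * norm (d1 t)) \<partial>lborel)
              \<le> ennreal (sqrt (4*pi*lam) / (7/8))"
        proof (rule piece_bound[OF Pint _ normT[OF cI] _ lam])
          fix t assume t: "t \<in> P k"
          have tI: "t \<in> I" using Psub t by blast
          show "(gamma has_vector_derivative d1 t) (at t within P k)"
            by (rule has_vector_derivative_within_subset[OF d1[OF tI] Psub])
          show "d1 t \<noteq> 0" by (rule immersed[OF tI])
          have "\<bar>K t - K c\<bar> \<le> pi/8" using c t by blast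
          then have ch: "norm (T t - T c) \<le> pi/8" using Kchord[OF cI tI] by linarith
          have pi8: "pi/8 \<le> 1/2" using pi_less_4 by simp
          have "(norm (T t - T c))\<^sup>2 \<le> (1/2)\<^sup>2"
            by (rule power_mono) (use ch pi8 in auto)
          then have ip: "inner (T t) (T c) \<ge> 7/8"
            using unit_inner[OF normT[OF tI] normT[OF cI]] by (simp add: power2_eq_square)
          have dt: "d1 t = norm (d1 t) *\<^sub>R T t" unfolding T_def using immersed[OF tI] by simp
          have "inner (d1 t) (T c) = norm (d1 t) * inner (T t) (T c)"
            by (subst dt) (simp add: inner_scaleR_left)
          also have "\<dots> \<ge> norm (d1 t) * (7/8)"
            by (rule mult_left_mono[OF ip]) simp
          finally show "7/8 * norm (d1 t) \<le> inner (d1 t) (T c)" by (simp add: mult.commute)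
        qed simp
        also have "\<dots> \<le> ennreal C"
        proof (rule ennreal_leI)
          have "sqrt (4*pi*lam) / (7/8) = sqrt (4*pi*lam) * (8/7)" by simp
          also have "\<dots> \<le> C" unfolding C_def
            by (rule mult_left_mono[OF sqrt2_bound]) (use lam in simp)
          finally show "sqrt (4*pi*lam) / (7/8) \<le> C" .
        qed
        finally show ?thesis unfolding F_def .
      qed
      have "(\<integral>\<^sup>+t\<in>I. ennreal (F t) \<partial>lborel) \<le> (\<integral>\<^sup>+t. (\<Sum>k<4*\<alpha>. ennreal (F t) * indicator (P k) t) \<partial>lborel)"
      proof (rule nn_integral_mono)
        fix t
        show "ennreal (F t) * indicator I t \<le> (\<Sum>k<4*\<alpha>. ennreal (F t) * indicator (P k) t)"
        proof (cases "t \<in> I")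
          case True
          then obtain k where k: "k < 4*\<alpha>" "t \<in> P k" using cover by blast
          have "ennreal (F t) * indicator I t = ennreal (F t) * indicator (P k) t"
            using True k by simp
          also have "\<dots> \<le> (\<Sum>k<4*\<alpha>. ennreal (F t) * indicator (P k) t)"
            by (rule member_le_sum) (use k in auto)
          finally show ?thesis .
        qed simp
      qed
      also have "\<dots> = (\<Sum>k<4*\<alpha>. (\<integral>\<^sup>+t. ennreal (F t) * indicator (P k) t \<partial>lborel))"
        by (rule nn_integral_sum) (rule meas)
      also have "\<dots> \<le> (\<Sum>k<4*\<alpha>. ennreal C)"
        by (rule sum_mono) (rule piece)
      also have "\<dots> = ennreal (real (4*\<alpha>)) * ennreal C"
        by (simp add: ennreal_of_nat_eq_real_of_nat)
      also have "\<dots> = ennreal (real (4*\<alpha>) * C)"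
        by (rule ennreal_mult[symmetric]) (use lam in \<open>auto simp: C_def\<close>)
      also have "\<dots> = ennreal (4 * real \<alpha> * C)" by simp
      finally show ?thesis unfolding F_def C_def .
    qed
    show ?thesis
      unfolding entropy_def
    proof (rule SUP_least)
      fix p :: "(real^2) \<times> real" assume p: "p \<in> UNIV \<times> {0<..}"
      define x0 where "x0 = fst p"
      define lam where "lam = snd p"
      have lam: "lam > 0" using p unfolding lam_def by auto
      have "gauss_F gamma d1 I (fst p) (snd p) \<le> ennreal (1 / sqrt (4 * pi * lam)) *
              ennreal (4 * real \<alpha> * (sqrt (4*pi*lam) * sqrt 2))"
        unfolding gauss_F_def x0_def[symmetric] lam_def[symmetric]
        by (rule mult_left_mono[OF main[OF lam]]) simp
      also have "\<dots> = ennreal (4 * real \<alpha> * sqrt 2)"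
      proof -
        have pos: "sqrt (4*pi*lam) > 0" using lam by simp
        have "1 / sqrt (4 * pi * lam) * (4 * real \<alpha> * (sqrt (4*pi*lam) * sqrt 2)) = 4 * real \<alpha> * sqrt 2"
          using pos lam by (simp add: field_simps)
        then show ?thesis using pos by (simp flip: ennreal_mult)
      qed
      finally show "gauss_F gamma d1 I (fst p) (snd p) \<le> ennreal (4 * real \<alpha> * sqrt 2)" .
    qed
  qed
qed

end
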